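(* Let $V$ be a real vector space of dimension $m=p+q\ge3$ with a non-degenerate symmetric inner product of arbitrary signature $(p,q)$, and let $\nabla R$ be a covariant derivative algebraic curvature tensor on $V$. If the eigenvalues of $\mathcal{S}_{\nabla R}(\cdot)$ are constant on $S^+(V)$ and on $S^-(V)$, then $\mathcal{S}_{\nabla R}(x)$ is nilpotent for every complex null vector $x\in\mathcal{N}$.
   Context: A covariant derivative algebraic curvature tensor is $\nabla R\in\otimes^5V^*$ satisfying $\nabla R(a,b,c,d;e)=-\nabla R(b,a,c,d;e)=\nabla R(c,d,a,b;e)$, $\nabla R(a,b,c,d;e)+\nabla R(a,c,d,b;e)+\nabla R(a,d,b,c;e)=0$, and $\nabla R(a,b,c,d;e)+\nabla R(a,b,d,e;c)+\nabla R(a,b,e,c;d)=0$. The Szab\'o operator $\mathcal{S}_{\nabla R}(x)$ is the linear map of $V$ defined by $(\mathcal{S}_{\nabla R}(x)y,w)=\nabla R(y,x,x,w;x)$. $S^\pm(V)=\{v\in V:(v,v)=\pm1\}$ are the pseudo-spheres of unit spacelike and timelike vectors. Everything is extended complex-multilinearly to $V_{\mathbb{C}}=V\otimes\mathbb{C}$; $\mathcal{N}=\{v\in V_{\mathbb{C}}:(v,v)=0\}$. A linear map $A$ is nilpotent if $A^m=0$, equivalently $\operatorname{trace}(A^i)=0$ for $1\le i\le m$. *)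

theory Defs
  imports "HOL-Analysis.Analysis"
begin

text \<open>The inner product is
 (u,v) = u^T G v for a real symmetric invertible (non-degenerate) matrix G of arbitrary
 signature. A 5-tensor on V is given by its components T i j k l r on the basis.
 Everything is extended complex-multilinearly to V_C = complex^'n.\<close>

definition cmat :: "real^'n^'n \<Rightarrow> complex^'n^'n" where
  "cmat G = (\<chi> i j. complex_of_real (G $ i $ j))"

definition cvec :: "real^'n \<Rightarrow> complex^'n" where
  "cvec x = (\<chi> i. complex_of_real (x $ i))"

definition ip :: "real^'n^'n \<Rightarrow> complex^'n \<Rightarrow> complex^'n \<Rightarrow> complex" where
  "ip G u v = (\<Sum>i\<in>UNIV. \<Sum>j\<in>UNIV. complex_of_real (G $ i $ j) * u $ i * v $ j)"

definition nondeg_sym :: "real^'n^'n \<Rightarrow> bool" where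
  "nondeg_sym G \<longleftrightarrow> transpose G = G \<and> invertible G"

definition tens5 :: "('n \<Rightarrow> 'n \<Rightarrow> 'n \<Rightarrow> 'n \<Rightarrow> 'n \<Rightarrow> real) \<Rightarrow>
    complex^'n \<Rightarrow> complex^'n \<Rightarrow> complex^'n \<Rightarrow> complex^'n \<Rightarrow> complex^'n \<Rightarrow> complex" where
  "tens5 T a b c d e = (\<Sum>i\<in>UNIV. \<Sum>j\<in>UNIV. \<Sum>k\<in>UNIV. \<Sum>l\<in>UNIV. \<Sum>r\<in>UNIV.
      complex_of_real (T i j k l r) * a $ i * b $ j * c $ k * d $ l * e $ r)"

text \<open>covariant derivative algebraic curvature tensor (the defining symmetries, on basis
 components; by multilinearity equivalent to the identities on all vectors)\<close>
definition cdact :: "('n \<Rightarrow> 'n \<Rightarrow> 'n \<Rightarrow> 'n \<Rightarrow> 'n \<Rightarrow> real) \<Rightarrow> bool" where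
  "cdact T \<longleftrightarrow> (\<forall>a b c d e.
      T a b c d e = - T b a c d e \<and>
      T a b c d e = T c d a b e \<and>
      T a b c d e + T a c d b e + T a d b c e = 0 \<and>
      T a b c d e + T a b d e c + T a b e c d = 0)"

text \<open>Matrix of the Szabo operator S(x), defined by (S(x) y, w) = nablaR(y,x,x,w;x).
 With B w y = nablaR(e_y,x,x,e_w;x), S(x) = G^{-1} B.\<close>
definition szabo :: "real^'n^'n \<Rightarrow> ('n \<Rightarrow> 'n \<Rightarrow> 'n \<Rightarrow> 'n \<Rightarrow> 'n \<Rightarrow> real) \<Rightarrow>
    complex^'n \<Rightarrow> complex^'n^'n" where
  "szabo G T x = matrix_inv (cmat G) **
      (\<chi> w y. tens5 T (axis y 1) x x (axis w 1) x)"

definition eigenvalues :: "complex^'n^'n \<Rightarrow> complex set" where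
  "eigenvalues A = {c. \<exists>v. v \<noteq> 0 \<and> A *v v = c *s v}"

definition nilpotent_mat :: "complex^'n^'n \<Rightarrow> bool" where
  "nilpotent_mat A \<longleftrightarrow> (\<exists>k. ((\<lambda>v. A *v v) ^^ k) = (\<lambda>v. 0))"

end

theory Submission
  imports Defs "HOL-Complex_Analysis.Complex_Analysis"
begin


lemma span_lessThan_sum:
  fixes v :: "nat \<Rightarrow> 'a::real_vector"
  shows "x \<in> span (v ` {..<j}) \<Longrightarrow> \<exists>c. x = (\<Sum>i<j. c i *\<^sub>R v i)"
proof (induction j arbitrary: x)
  case 0 then show ?case by simp
next
  case (Suc j)
  have "v ` {..<Suc j} = insert (v j) (v ` {..<j})" by (simp add: lessThan_Suc)
  with Suc.prems obtain k where "x - k *\<^sub>R v j \<in> span (v ` {..<j})"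
    by (auto simp: span_breakdown_eq)
  from Suc.IH[OF this] obtain c where c: "x - k *\<^sub>R v j = (\<Sum>i<j. c i *\<^sub>R v i)" by blast
  have "(\<Sum>i<Suc j. (c(j := k)) i *\<^sub>R v i) = (\<Sum>i<j. c i *\<^sub>R v i) + k *\<^sub>R v j"
    by (simp add: sum.lessThan_Suc)
  then show ?case using c by (metis diff_add_cancel)
qed

lemma krylov:
  fixes v :: "nat \<Rightarrow> 'a::euclidean_space"
  shows "\<exists>j \<le> DIM('a). \<exists>c. v j = (\<Sum>i<j. c i *\<^sub>R v i)"
proof (rule ccontr)
  assume H: "\<not> ?thesis"
  have "j \<le> Suc DIM('a) \<Longrightarrow> dim (v ` {..<j}) = j" for j
  proof (induction j)
    case 0 show ?case by simp
  next
    case (Suc j)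
    have ns: "v j \<notin> span (v ` {..<j})" using H Suc.prems span_lessThan_sum by fastforce
    have "v ` {..<Suc j} = insert (v j) (v ` {..<j})" by (simp add: lessThan_Suc)
    then show ?case using Suc ns by (simp add: dim_insert)
  qed
  from this[of "Suc DIM('a)"] have "dim (v ` {..<Suc DIM('a)}) = Suc DIM('a)" by simp
  moreover have "dim (v ` {..<Suc DIM('a)}) \<le> DIM('a)" by (rule dim_subset_UNIV)
  ultimately show False by simp
qed

definition polyop :: "complex^'n^'n \<Rightarrow> complex poly \<Rightarrow> complex^'n \<Rightarrow> complex^'n" where
  "polyop A p w = (\<Sum>i\<le>degree p. coeff p i *s (((\<lambda>v. A *v v) ^^ i) w))"

lemma polyop_bound:
  "degree p \<le> n \<Longrightarrow> polyop A p w = (\<Sum>i\<le>n. coeff p i *s (((\<lambda>v. A *v v) ^^ i) w))"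
  unfolding polyop_def by (rule sum.mono_neutral_left) (auto simp: coeff_eq_0)

lemma polyop_add: "polyop A (p + q) w = polyop A p w + polyop A q w"
proof -
  let ?n = "max (degree p) (degree q)"
  have "degree (p + q) \<le> ?n" by (rule degree_add_le) auto
  then show ?thesis
    by (simp add: polyop_bound[of _ ?n] vector_sadd_rdistrib sum.distrib)
qed

lemma polyop_smult: "polyop A (smult a p) w = a *s polyop A p w"
proof -
  have "degree (smult a p) \<le> degree p" by (rule degree_smult_le)
  then show ?thesis
    by (simp add: polyop_bound[of _ "degree p"] polyop_def vec_eq_iff sum_distrib_left mult.assoc)
qed

lemma polyop_pCons0: "polyop A (pCons 0 p) w = A *v polyop A p w"
proof -
  have "degree (pCons 0 p) \<le> Suc (degree p)" by simp
  then have "polyop A (pCons 0 p) w = (\<Sum>i\<le>Suc (degree p). coeff (pCons 0 p) i *s (((\<lambda>v. A *v v) ^^ i) w))"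
    by (rule polyop_bound)
  also have "\<dots> = (\<Sum>i\<le>degree p. coeff p i *s (A *v (((\<lambda>v. A *v v) ^^ i) w)))"
    by (subst sum.atMost_Suc_shift) simp
  also have "\<dots> = A *v polyop A p w"
    by (simp add: polyop_def vec.sum vector_scalar_commute)
  finally show ?thesis .
qed

lemma polyop_const: "polyop A [:a:] w = a *s w"
  by (simp add: polyop_def)

definition csub :: "(complex^'n) set \<Rightarrow> bool" where
  "csub W \<longleftrightarrow> 0 \<in> W \<and> (\<forall>x\<in>W. \<forall>y\<in>W. x + y \<in> W) \<and> (\<forall>c. \<forall>x\<in>W. c *s x \<in> W)"

lemma csub_sum: "csub W \<Longrightarrow> (\<And>i. i \<in> I \<Longrightarrow> f i \<in> W) \<Longrightarrow> sum f I \<in> W"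
  unfolding csub_def
  by (induction I rule: infinite_finite_induct) auto

lemma polyop_in:
  assumes "csub W" "\<forall>x\<in>W. A *v x \<in> W" "w \<in> W"
  shows "polyop A p w \<in> W"
proof -
  have "((\<lambda>v. A *v v) ^^ i) w \<in> W" for i
    by (induction i) (use assms in auto)
  then show ?thesis unfolding polyop_def
    by (intro csub_sum[OF assms(1)]) (use assms(1) in \<open>auto simp: csub_def\<close>)
qed

lemma ev_poly:
  assumes "p \<noteq> 0" "polyop A p w = 0" "w \<noteq> 0" "csub W" "\<forall>x\<in>W. A *v x \<in> W" "w \<in> W"
  shows "\<exists>u\<in>W. u \<noteq> 0 \<and> (\<exists>\<mu>. A *v u = \<mu> *s u)"
  using assms(1,2)
proof (induction "degree p" arbitrary: p rule: less_induct)
  case less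
  show ?case
  proof (cases "degree p = 0")
    case True
    then obtain a where pa: "p = [:a:]" by (rule degree_eq_zeroE)
    with less.prems have "a \<noteq> 0" by simp
    with less.prems pa assms(3) show ?thesis by (simp add: polyop_const vec.scale_eq_0_iff)
  next
    case False
    have "\<exists>z. (\<Sum>i\<le>degree p. coeff p i * z^i) = 0"
    proof (rule fundamental_theorem_of_algebra[of "coeff p" "degree p"])
      have "degree p \<in> {1..degree p}" using False by auto
      moreover have "coeff p (degree p) \<noteq> 0" using less.prems(1) by simp
      ultimately show "coeff p 0 = 0 \<or> (\<exists>i\<in>{1..degree p}. coeff p i \<noteq> 0)" by blast
    qed blast
    then obtain r where "poly p r = 0" by (auto simp: poly_altdef)
    then obtain q where pq: "p = [:-r,1:] * q" using poly_eq_0_iff_dvd by (metis dvdE)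
    have q0: "q \<noteq> 0" using pq less.prems(1) by auto
    have "degree p = degree [:-r,1:] + degree q" unfolding pq
      by (rule degree_mult_eq) (use q0 in auto)
    then have dq: "degree q < degree p" by simp
    have "p = smult (-r) q + pCons 0 q" using pq by simp
    then have "polyop A p w = - r *s polyop A q w + A *v polyop A q w"
      by (simp only: polyop_add polyop_smult polyop_pCons0)
    with less.prems have eq: "A *v polyop A q w = r *s polyop A q w"
      by (simp add: vec_eq_iff algebra_simps)
    show ?thesis
    proof (cases "polyop A q w = 0")
      case True
      then show ?thesis using less.hyps[OF dq q0] by blast
    next
      case False
      then show ?thesis using eq polyop_in[OF assms(4,5,6)] by blast
    qed
  qed
qed


lemma scaleR_cvec: "c *\<^sub>R (x::complex^'n) = complex_of_real c *s x"
  unfolding vec_eq_iff by (simp add: scaleR_conv_of_real[where 'a=complex])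

lemma EV:
  fixes A :: "complex^'n^'n"
  assumes "csub W" "\<forall>x\<in>W. A *v x \<in> W" "w \<in> W" "w \<noteq> 0"
  shows "\<exists>u\<in>W. u \<noteq> 0 \<and> (\<exists>\<mu>. A *v u = \<mu> *s u)"
proof -
  obtain j c where jc: "(((\<lambda>v. A *v v)^^j) w) = (\<Sum>i<j. c i *\<^sub>R (((\<lambda>v. A *v v)^^i) w))"
    using krylov[of "\<lambda>i. (((\<lambda>v. A *v v)^^i) w)"] by blast
  define p where "p = monom 1 j - (\<Sum>i<j. monom (complex_of_real (c i)) i)"
  have cp: "coeff p i = (if i = j then 1 else if i < j then - complex_of_real (c i) else 0)" for i
    by (auto simp: p_def coeff_diff coeff_sum coeff_monom)
  have p0: "p \<noteq> 0" using cp[of j] by auto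
  have dp: "degree p \<le> j" by (rule degree_le) (auto simp: cp)
  have "polyop A p w = (\<Sum>i\<le>j. coeff p i *s (((\<lambda>v. A *v v) ^^ i) w))"
    by (rule polyop_bound[OF dp])
  also have "\<dots> = (((\<lambda>v. A *v v)^^j) w) - (\<Sum>i<j. complex_of_real (c i) *s (((\<lambda>v. A *v v)^^i) w))"
    by (simp add: lessThan_Suc_atMost[symmetric] sum.lessThan_Suc cp sum_negf)
  also have "\<dots> = 0" using jc by (simp add: scaleR_cvec)
  finally show ?thesis using ev_poly[OF p0 _ assms(4,1,2,3)] by blast
qed

lemma dim_image_kernel:
  fixes f :: "'a::euclidean_space \<Rightarrow> 'b::euclidean_space"
  assumes lf: "linear f" and "subspace W" "u \<in> W" "u \<noteq> 0" "f u = 0"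
  shows "dim (f ` W) < dim W"
proof -
  have "independent {u}" using assms(4) by (simp add: independent_insert)
  then obtain B where B: "{u} \<subseteq> B" "B \<subseteq> W" "independent B" "W \<subseteq> span B"
    using maximal_independent_subset_extend[of "{u}" W] assms(3) by blast
  have fin: "finite B" using independent_bound_general B(3) by blast
  have dW: "dim W = card B" using dim_unique[OF B(2) B(4) B(3) refl] .
  have fB: "f ` B = insert 0 (f ` (B - {u}))" using B(1) assms(5) by auto
  have "f ` W \<subseteq> f ` span B" using B(4) by auto
  also have "\<dots> = span (f ` B)" using span_linear_image[OF lf] by simp
  also have "\<dots> = span (f ` (B - {u}))" using fB span_insert_0 by simp
  finally have "dim (f ` W) \<le> card (f ` (B - {u}))" by (rule dim_le_card) (simp add: fin)
  also have "\<dots> \<le> card (B - {u})" by (rule card_image_le) (simp add: fin)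
  also have "\<dots> < card B" using B(1) fin by (intro card_Diff1_less) auto
  finally show ?thesis using dW by simp
qed

primrec mpow :: "complex^'n^'n \<Rightarrow> nat \<Rightarrow> complex^'n^'n" where
  "mpow A 0 = mat 1"
| "mpow A (Suc k) = A ** mpow A k"

lemma mpow_apply: "mpow A k *v v = (((\<lambda>v. A *v v)^^k) v)"
  by (induction k arbitrary: v) (simp_all add: matrix_vector_mul_assoc[symmetric])

lemma linear_cmat: "linear (\<lambda>v. (K::complex^'n^'n) *v v)"
  by (rule linearI) (simp_all add: matrix_vector_right_distrib scaleR_cvec vector_scalar_commute)

lemma mat_eq0: "(\<And>v. (M::complex^'n^'n) *v v = 0) \<Longrightarrow> M = 0"
proof -
  assume H: "\<And>v. M *v v = 0"
  have "M $ i $ j = 0" for i j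
  proof -
    have "(M *v axis j 1) $ i = M $ i $ j"
      by (simp add: matrix_vector_mult_def axis_def if_distrib cong: if_cong)
    then show ?thesis using H by simp
  qed
  then show ?thesis by (simp add: vec_eq_iff)
qed

lemma csub_range: "csub (range (\<lambda>v. (M::complex^'n^'n) *v v))"
  proof -
    have "0 \<in> range (\<lambda>v. M *v v)" by (rule image_eqI[of _ _ 0]) auto
    moreover have "x + y \<in> range (\<lambda>v. M *v v)" if xy: "x \<in> range (\<lambda>v. M *v v)" "y \<in> range (\<lambda>v. M *v v)" for x y
    proof -
      obtain a b where "x = M *v a" "y = M *v b" using xy by blast
      then show ?thesis by (intro image_eqI[of _ _ "a + b"]) (simp_all add: matrix_vector_right_distrib)
    qed
    moreover have "c *s x \<in> range (\<lambda>v. M *v v)" if xx: "x \<in> range (\<lambda>v. M *v v)" for c x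
    proof -
      obtain a where "x = M *v a" using xx by blast
      then show ?thesis by (intro image_eqI[of _ _ "c *s a"]) (simp_all add: vector_scalar_commute)
    qed
    ultimately show ?thesis unfolding csub_def by blast
  qed

lemma KL:
  fixes A K :: "complex^'n^'n"
  assumes comm: "\<And>v. A *v (K *v v) = K *v (A *v v)"
    and kill: "\<And>v \<mu>. v \<noteq> 0 \<Longrightarrow> A *v v = \<mu> *s v \<Longrightarrow> K *v v = 0"
  shows "mpow K (Suc DIM(complex^'n)) = 0"
proof -
  define W where "W k = range (\<lambda>v. mpow K k *v v)" for k
  have csubW: "csub (W k)" for k
    unfolding W_def by (rule csub_range)
  have commk: "A *v (mpow K k *v v) = mpow K k *v (A *v v)" for k v
    by (induction k arbitrary: v) (simp_all add: matrix_vector_mul_assoc[symmetric] comm)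
  have invW: "\<forall>x\<in>W k. A *v x \<in> W k" for k
    unfolding W_def using commk by auto
  have subW: "subspace (W k)" for k
    using csubW[of k] unfolding csub_def subspace_def by (auto simp: scaleR_cvec)
  have step: "W (Suc k) = (\<lambda>v. K *v v) ` W k" for k
    unfolding W_def by (auto simp: matrix_vector_mul_assoc[symmetric] image_image)
  have dec: "dim (W (Suc k)) < dim (W k)" if ne: "W k \<noteq> {0}" for k
  proof -
    obtain w where w: "w \<in> W k" "w \<noteq> 0" using ne csubW[of k] unfolding csub_def by blast
    obtain u \<mu> where u: "u \<in> W k" "u \<noteq> 0" "A *v u = \<mu> *s u"
      using EV[OF csubW invW w] by blast
    have "K *v u = 0" using kill u by blast
    then show ?thesis unfolding step
      by (rule dim_image_kernel[OF linear_cmat subW u(1,2)])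
  qed
  have "W k = {0} \<or> dim (W k) + k \<le> DIM(complex^'n)" for k
  proof (induction k)
    case 0 show ?case using dim_subset_UNIV[of "W 0"] by simp
  next
    case (Suc k)
    show ?case
    proof (cases "W k = {0}")
      case True then show ?thesis unfolding step by simp
    next
      case False
      with Suc dec[OF False] show ?thesis by auto
    qed
  qed
  from this[of "Suc DIM(complex^'n)"] have "W (Suc DIM(complex^'n)) = {0}" by auto
  then show ?thesis unfolding W_def by (intro mat_eq0) auto
qed

lemma mpow_eigen: "A *v v = \<mu> *s v \<Longrightarrow> mpow A i *v v = \<mu>^i *s v"
  by (induction i) (simp_all add: matrix_vector_mul_assoc[symmetric] vector_scalar_commute)

lemma sum_mat_apply: "(\<Sum>i\<in>I. (f i :: complex^'n^'n)) *v v = (\<Sum>i\<in>I. f i *v v)"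
  by (induction I rule: infinite_finite_induct) (simp_all add: matrix_vector_mult_add_rdistrib)

lemma scaleR_mat_apply: "(c *\<^sub>R (M :: complex^'n^'n)) *v v = c *\<^sub>R (M *v v)"
  unfolding vec_eq_iff matrix_vector_mult_def
  by (simp add: scaleR_conv_of_real[where 'a=complex] sum_distrib_left mult.assoc)

lemma eigenvalues_finite: "finite (eigenvalues (A::complex^'n^'n))"
proof -
  obtain j c where jc: "mpow A j = (\<Sum>i<j. c i *\<^sub>R mpow A i)"
    using krylov[of "mpow A"] by blast
  define p where "p = monom 1 j - (\<Sum>i<j. monom (complex_of_real (c i)) i)"
  have cp: "coeff p j = 1"
    by (auto simp: p_def coeff_diff coeff_sum coeff_monom)
  have p0: "p \<noteq> 0" using cp by auto
  have "eigenvalues A \<subseteq> {x. poly p x = 0}"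
  proof
    fix \<mu> assume "\<mu> \<in> eigenvalues A"
    then obtain v where v: "v \<noteq> 0" "A *v v = \<mu> *s v" unfolding eigenvalues_def by blast
    have "\<mu>^j *s v = mpow A j *v v" using mpow_eigen[OF v(2)] by simp
    also have "\<dots> = (\<Sum>i<j. c i *\<^sub>R (\<mu>^i *s v))"
      unfolding jc sum_mat_apply scaleR_mat_apply using mpow_eigen[OF v(2)] by simp
    also have "\<dots> = (\<Sum>i<j. complex_of_real (c i) * \<mu>^i) *s v"
      by (simp add: scaleR_cvec vec_eq_iff sum_distrib_right mult.assoc)
    finally have "(\<mu>^j - (\<Sum>i<j. complex_of_real (c i) * \<mu>^i)) *s v = 0"
      by (simp add: vector_sub_rdistrib)
    then have "\<mu>^j - (\<Sum>i<j. complex_of_real (c i) * \<mu>^i) = 0" using v(1) by (simp add: vec.scale_eq_0_iff)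
    then show "\<mu> \<in> {x. poly p x = 0}" by (simp add: p_def poly_sum poly_monom)
  qed
  then show ?thesis using poly_roots_finite[OF p0] finite_subset by blast
qed



definition ipr :: "real^'n^'n \<Rightarrow> real^'n \<Rightarrow> real^'n \<Rightarrow> real" where
  "ipr G x y = (\<Sum>i\<in>UNIV. \<Sum>j\<in>UNIV. G $ i $ j * x $ i * y $ j)"

lemma ip_cvec: "ip G (cvec x) (cvec y) = complex_of_real (ipr G x y)"
  by (simp add: ip_def ipr_def cvec_def)

lemma cvec_scale: "cvec (c *\<^sub>R x) = complex_of_real c *s cvec x"
  by (simp add: vec_eq_iff cvec_def)

lemma cvec_add: "cvec (x + y) = cvec x + cvec y"
  by (simp add: vec_eq_iff cvec_def)

lemma cvec_diff: "cvec (x - y) = cvec x - cvec y"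
  by (simp add: vec_eq_iff cvec_def)

lemma ipr_scale: "ipr G (c *\<^sub>R x) (c *\<^sub>R x) = c^2 * ipr G x x"
  unfolding ipr_def by (simp add: sum_distrib_left power2_eq_square mult_ac)

lemma tens5_scale: "tens5 T a (c *s x) (c *s x) d (c *s x) = c^3 * tens5 T a x x d x"
  unfolding tens5_def by (simp add: sum_distrib_left power3_eq_cube mult_ac)

lemma szabo_scale: "szabo G T (c *s x) *v v = c^3 *s (szabo G T x *v v)"
proof -
  have "(\<chi> w y. tens5 T (axis y 1) (c *s x) (c *s x) (axis w 1) (c *s x)) *v v
      = c^3 *s ((\<chi> w y. tens5 T (axis y 1) x x (axis w 1) x) *v v)"
    unfolding tens5_scale by (simp add: vec_eq_iff matrix_vector_mult_def sum_distrib_left mult.assoc)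
  then show ?thesis
    by (simp add: szabo_def matrix_vector_mul_assoc[symmetric] vector_scalar_commute)
qed

lemma mat_apply: "mat c *v (v::complex^'n) = c *s v"
proof -
  have "(\<Sum>j\<in>UNIV. (if i = j then c else 0) * v $ j) = (\<Sum>j\<in>UNIV. if i = j then c * v$j else 0)" for i
    by (rule sum.cong) auto
  then show ?thesis by (simp add: vec_eq_iff matrix_vector_mult_def mat_def)
qed

definition Fm :: "real^'n^'n \<Rightarrow> ('n \<Rightarrow> 'n \<Rightarrow> 'n \<Rightarrow> 'n \<Rightarrow> 'n \<Rightarrow> real) \<Rightarrow> real \<Rightarrow> complex \<Rightarrow> complex^'n \<Rightarrow> complex^'n^'n" where
  "Fm G T \<epsilon> l x = szabo G T x ** szabo G T x - mat (complex_of_real \<epsilon> * l^2 * (ip G x x)^3)"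

definition Kmat :: "real^'n^'n \<Rightarrow> ('n \<Rightarrow> 'n \<Rightarrow> 'n \<Rightarrow> 'n \<Rightarrow> 'n \<Rightarrow> real) \<Rightarrow> real \<Rightarrow> complex list \<Rightarrow> complex^'n \<Rightarrow> complex^'n^'n" where
  "Kmat G T \<epsilon> es x = foldr (\<lambda>l M. Fm G T \<epsilon> l x ** M) es (mat 1)"

definition Mx :: "real^'n^'n \<Rightarrow> ('n \<Rightarrow> 'n \<Rightarrow> 'n \<Rightarrow> 'n \<Rightarrow> 'n \<Rightarrow> real) \<Rightarrow> real \<Rightarrow> complex list \<Rightarrow> complex^'n \<Rightarrow> complex^'n^'n" where
  "Mx G T \<epsilon> es x = mpow (Kmat G T \<epsilon> es x) (Suc DIM(complex^'n))"

lemma Fm_apply: "Fm G T \<epsilon> l x *v u = szabo G T x *v (szabo G T x *v u) - (complex_of_real \<epsilon> * l^2 * (ip G x x)^3) *s u"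
  by (simp add: Fm_def matrix_vector_mult_diff_rdistrib mat_apply matrix_vector_mul_assoc[symmetric])

lemma Kmat_Cons: "Kmat G T \<epsilon> (l # es) x *v u = Fm G T \<epsilon> l x *v (Kmat G T \<epsilon> es x *v u)"
  by (simp add: Kmat_def matrix_vector_mul_assoc[symmetric])

lemma Kmat_Nil: "Kmat G T \<epsilon> [] x *v u = u"
  by (simp add: Kmat_def)

lemma Kmat_comm: "szabo G T x *v (Kmat G T \<epsilon> es x *v v) = Kmat G T \<epsilon> es x *v (szabo G T x *v v)"
proof (induction es arbitrary: v)
  case Nil then show ?case by (simp add: Kmat_Nil)
next
  case (Cons l es)
  have F: "szabo G T x *v (Fm G T \<epsilon> l x *v u) = Fm G T \<epsilon> l x *v (szabo G T x *v u)" for u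
    by (simp add: Fm_apply matrix_vector_mult_diff_distrib vector_scalar_commute)
  show ?case by (simp add: Kmat_Cons F Cons.IH)
qed

lemma Kmat_eig:
  assumes "szabo G T x *v v = \<mu> *s v"
  shows "Kmat G T \<epsilon> es x *v v = (\<Prod>l\<leftarrow>es. \<mu>^2 - complex_of_real \<epsilon> * l^2 * (ip G x x)^3) *s v"
proof (induction es)
  case Nil then show ?case by (simp add: Kmat_Nil)
next
  case (Cons l es)
  have F: "Fm G T \<epsilon> l x *v (a *s v) = (a * (\<mu>^2 - complex_of_real \<epsilon> * l^2 * (ip G x x)^3)) *s v" for a
    by (simp add: Fm_apply vector_scalar_commute assms power2_eq_square vec_eq_iff algebra_simps)
  show ?case by (simp add: Kmat_Cons Cons.IH F mult.commute)
qed

lemma Kmat_null: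
  assumes "ip G x x = 0"
  shows "Kmat G T \<epsilon> es x *v u = (((\<lambda>v. szabo G T x *v v)^^(2 * length es)) u)"
proof (induction es arbitrary: u)
  case Nil then show ?case by (simp add: Kmat_Nil)
next
  case (Cons l es)
  have "((\<lambda>v. szabo G T x *v v)^^(2 * length (l # es))) u
     = szabo G T x *v (szabo G T x *v (((\<lambda>v. szabo G T x *v v)^^(2 * length es)) u))"
    by simp
  then show ?case using assms by (simp add: Kmat_Cons Fm_apply Cons.IH del: funpow.simps)
qed

lemma kill_lemma:
  assumes hyp: "\<forall>y. ipr G y y = \<epsilon> \<longrightarrow> eigenvalues (szabo G T (cvec y)) = E"
    and eps: "\<epsilon> = 1 \<or> \<epsilon> = -1" and pos: "\<epsilon> * ipr G x x > 0"
    and ev: "v \<noteq> 0" "szabo G T (cvec x) *v v = \<mu> *s v"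
  shows "\<exists>l\<in>E. \<mu>^2 = complex_of_real \<epsilon> * l^2 * (ip G (cvec x) (cvec x))^3"
proof -
  define \<rho> where "\<rho> = ipr G x x"
  define s where "s = sqrt (\<epsilon> * \<rho>)"
  have s0: "s > 0" using pos by (simp add: s_def \<rho>_def)
  have s2: "s^2 = \<epsilon> * \<rho>" using pos by (simp add: s_def \<rho>_def)
  have ee: "\<epsilon> * \<epsilon> = 1" using eps by auto
  define y where "y = (1/s) *\<^sub>R x"
  have "ipr G y y = \<epsilon>"
  proof -
    have "ipr G y y = \<rho> / s^2" by (simp add: y_def ipr_scale \<rho>_def power_divide)
    also have "\<dots> = \<epsilon>" using s2 ee s0 eps by (auto simp: field_simps)
    finally show ?thesis .
  qed
  with hyp have E: "eigenvalues (szabo G T (cvec y)) = E" by blast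
  have xy: "cvec x = complex_of_real s *s cvec y"
    using s0 by (simp add: y_def cvec_scale vector_smult_assoc flip: of_real_mult)
  have "(complex_of_real s)^3 *s (szabo G T (cvec y) *v v) = \<mu> *s v"
    using ev(2) unfolding xy szabo_scale .
  then have "szabo G T (cvec y) *v v = (\<mu> / (complex_of_real s)^3) *s v"
    using s0 by (simp add: vec_eq_iff field_simps)
  then have lE: "\<mu> / (complex_of_real s)^3 \<in> E" using ev(1) E unfolding eigenvalues_def by blast
  have s6: "(complex_of_real s)^6 = complex_of_real \<epsilon> * (complex_of_real \<rho>)^3"
  proof -
    have "s^6 = (s^2)^3" by simp
    also have "\<dots> = \<epsilon> * \<rho>^3" using s2 ee by (simp add: power_mult_distrib power3_eq_cube)
    finally have "s^6 = \<epsilon> * \<rho>^3" .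
    then show ?thesis by (metis of_real_mult of_real_power)
  qed
  have "\<mu>^2 = complex_of_real \<epsilon> * (\<mu> / (complex_of_real s)^3)^2 * (ip G (cvec x) (cvec x))^3"
  proof -
    have ee': "complex_of_real \<epsilon> * complex_of_real \<epsilon> = 1" using ee by (metis of_real_1 of_real_mult)
    have "complex_of_real \<epsilon> * (\<mu> / (complex_of_real s)^3)^2 * (complex_of_real \<rho>)^3
        = complex_of_real \<epsilon> * \<mu>^2 * (complex_of_real \<rho>)^3 / (complex_of_real s)^6"
      by (simp add: power_divide flip: power_mult)
    also have "\<dots> = \<mu>^2" unfolding s6 using s0 s6 ee' 
      by (auto simp: field_simps)
    finally show ?thesis by (simp add: ip_cvec \<rho>_def)
  qed
  then show ?thesis using lE by blast
qed



definition hm :: "(complex \<Rightarrow> complex^'n^'n) \<Rightarrow> bool" where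
  "hm f \<longleftrightarrow> (\<forall>i j. (\<lambda>t. f t $ i $ j) holomorphic_on UNIV)"

lemma hm_mult: "hm f \<Longrightarrow> hm g \<Longrightarrow> hm (\<lambda>t. f t ** g t)"
  unfolding hm_def matrix_matrix_mult_def by (auto intro!: holomorphic_intros)

lemma hm_diff: "hm f \<Longrightarrow> hm g \<Longrightarrow> hm (\<lambda>t. f t - g t)"
  unfolding hm_def by (auto intro!: holomorphic_intros)

lemma hm_const: "hm (\<lambda>t. M)"
  unfolding hm_def by (auto intro!: holomorphic_intros)

lemma hm_mat: assumes "c holomorphic_on UNIV" shows "hm (\<lambda>t. mat (c t))"
  unfolding hm_def
proof (intro allI)
  fix i j
  have "(\<lambda>t. mat (c t) $ i $ j) = (if i = j then c else (\<lambda>t. 0))" by (auto simp: mat_def)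
  then show "(\<lambda>t. mat (c t) $ i $ j) holomorphic_on UNIV"
    using assms by (auto intro!: holomorphic_intros)
qed

lemma hm_mpow: "hm f \<Longrightarrow> hm (\<lambda>t. mpow (f t) k)"
  by (induction k) (auto intro!: hm_mult hm_const)

lemma hol_comp: "(\<lambda>t. (a + t *s b) $ k) holomorphic_on UNIV"
  by (auto intro!: holomorphic_intros)

lemma hm_szabo: "hm (\<lambda>t. szabo G T (a + t *s b))"
  unfolding szabo_def
proof (intro hm_mult hm_const)
  show "hm (\<lambda>t. \<chi> w y. tens5 T (axis y 1) (a + t *s b) (a + t *s b) (axis w 1) (a + t *s b))"
    unfolding hm_def tens5_def by (auto intro!: holomorphic_intros)
qed

lemma hol_ip: "(\<lambda>t. ip G (a + t *s b) (a + t *s b)) holomorphic_on UNIV"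
  unfolding ip_def by (auto intro!: holomorphic_intros)

lemma hm_Kmat: "hm (\<lambda>t. Kmat G T \<epsilon> es (a + t *s b))"
proof (induction es)
  case Nil then show ?case by (simp add: Kmat_def hm_const)
next
  case (Cons l es)
  have "hm (\<lambda>t. Fm G T \<epsilon> l (a + t *s b))"
    unfolding Fm_def by (intro hm_diff hm_mult hm_szabo hm_mat holomorphic_intros hol_ip)
  with Cons show ?case by (simp add: Kmat_def hm_mult)
qed

lemma hm_Mx: "hm (\<lambda>t. Mx G T \<epsilon> es (a + t *s b))"
  unfolding Mx_def by (intro hm_mpow hm_Kmat)

lemma ac_real:
  assumes "f holomorphic_on UNIV" "\<And>t::real. f (complex_of_real t) = 0"
  shows "f z = 0"
proof (rule analytic_continuation[OF assms(1) open_UNIV connected_UNIV subset_UNIV, of 0 "range complex_of_real"])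
  show "0 islimpt range complex_of_real"
    unfolding islimpt_approachable
  proof (intro allI impI)
    fix e :: real assume "0 < e"
    define r where "r = e/2"
    have "complex_of_real r \<in> range complex_of_real" by simp
    moreover have "complex_of_real r \<noteq> 0 \<and> dist (complex_of_real r) 0 < e"
      using \<open>0 < e\<close> by (simp add: r_def)
    ultimately show "\<exists>x'\<in>range complex_of_real. x' \<noteq> 0 \<and> dist x' 0 < e" by blast
  qed
qed (use assms in auto)

lemma ac_interval:
  assumes "f holomorphic_on UNIV" "d > 0" "\<And>t::real. 0 < t \<Longrightarrow> t < d \<Longrightarrow> f (complex_of_real t) = 0"
  shows "f z = 0"
proof (rule analytic_continuation[OF assms(1) open_UNIV connected_UNIV subset_UNIV, of 0 "complex_of_real ` {0<..<d}"])
  show "0 islimpt complex_of_real ` {0<..<d}"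
    unfolding islimpt_approachable
  proof (intro allI impI)
    fix e :: real assume "0 < e"
    then show "\<exists>x'\<in>complex_of_real ` {0<..<d}. x' \<noteq> 0 \<and> dist x' 0 < e"
      using assms(2) by (intro bexI[of _ "complex_of_real (min (e/2) (d/2))"]) auto
  qed
qed (use assms in auto)

lemma step1:
  fixes M :: "complex^'n \<Rightarrow> complex^'n^'n"
  assumes holM: "\<And>a b. hm (\<lambda>t. M (a + t *s b))"
    and x0: "\<epsilon> * ipr G x0 x0 > 0"
    and P: "\<And>x. \<epsilon> * ipr G x x > 0 \<Longrightarrow> M (cvec x) = 0"
  shows "M (cvec w) = 0"
proof -
  define q where "q s = \<epsilon> * ipr G (x0 + s *\<^sub>R (w - x0)) (x0 + s *\<^sub>R (w - x0))" for s
  have "continuous_on UNIV q" unfolding q_def ipr_def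
    by (simp add: algebra_simps) (intro continuous_intros)
  then have "isCont q 0" by (simp add: continuous_on_eq_continuous_at)
  then have "(q \<longlongrightarrow> q 0) (at 0)" by (simp add: isCont_def)
  moreover have "q 0 > 0" using x0 by (simp add: q_def)
  ultimately have "eventually (\<lambda>s. 0 < q s) (at 0)" by (rule order_tendstoD)
  then obtain d where d: "d > 0" "\<And>s. s \<noteq> 0 \<Longrightarrow> dist s 0 < d \<Longrightarrow> 0 < q s"
    unfolding eventually_at by auto
  have "M (cvec x0 + t *s (cvec w - cvec x0)) $ i $ j = 0" for t i j
  proof (rule ac_interval[of "\<lambda>t. M (cvec x0 + t *s (cvec w - cvec x0)) $ i $ j" d t, OF _ d(1)])
    show "(\<lambda>t. M (cvec x0 + t *s (cvec w - cvec x0)) $ i $ j) holomorphic_on UNIV"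
      using holM unfolding hm_def by blast
    fix s :: real assume s: "0 < s" "s < d"
    have "cvec x0 + complex_of_real s *s (cvec w - cvec x0) = cvec (x0 + s *\<^sub>R (w - x0))"
      by (simp add: cvec_add cvec_scale cvec_diff)
    moreover have "0 < q s" using d(2)[of s] s by simp
    ultimately show "M (cvec x0 + complex_of_real s *s (cvec w - cvec x0)) $ i $ j = 0"
      using P unfolding q_def by simp
  qed
  from this[of 1] show ?thesis by (simp add: vec_eq_iff)
qed

lemma step2:
  fixes M :: "complex^'n \<Rightarrow> complex^'n^'n"
  assumes holM: "\<And>a b. hm (\<lambda>t. M (a + t *s b))"
    and P: "\<And>x. M (cvec x) = 0"
  shows "M z = 0"
proof -
  define a where "a = (\<chi> k. Re (z $ k))"
  define b where "b = (\<chi> k. Im (z $ k))"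
  have "M (cvec a + t *s cvec b) $ i $ j = 0" for t i j
  proof (rule ac_real[of "\<lambda>t. M (cvec a + t *s cvec b) $ i $ j" t])
    show "(\<lambda>t. M (cvec a + t *s cvec b) $ i $ j) holomorphic_on UNIV"
      using holM unfolding hm_def by blast
    fix s :: real
    have "cvec a + complex_of_real s *s cvec b = cvec (a + s *\<^sub>R b)"
      by (simp add: cvec_add cvec_scale)
    then show "M (cvec a + complex_of_real s *s cvec b) $ i $ j = 0" using P by simp
  qed
  moreover have "cvec a + \<i> *s cvec b = z"
    by (simp add: vec_eq_iff a_def b_def cvec_def complex_eq_iff)
  ultimately show ?thesis by (metis vec_eq_iff zero_index)
qed



lemma ipr_axis: "ipr G (axis i 1) (axis j 1) = G $ i $ j"
proof -
  have inner: "(\<Sum>l\<in>UNIV. G$k$l * axis i 1 $ k * axis j (1::real) $ l) = (if k = i then G $ k $ j else 0)" for k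
  proof -
    have "(\<Sum>l\<in>UNIV. G$k$l * axis i 1 $ k * axis j (1::real) $ l)
        = (\<Sum>l\<in>UNIV. if l = j then (if k = i then G$k$l else 0) else 0)"
      by (rule sum.cong) (auto simp: axis_def)
    then show ?thesis by simp
  qed
  show ?thesis unfolding ipr_def inner by simp
qed

lemma ipr_add: "ipr G (x + y) (x + y) = ipr G x x + ipr G x y + ipr G y x + ipr G y y"
  unfolding ipr_def by (simp add: algebra_simps sum.distrib)

lemma ipr_sym: assumes "transpose G = G" shows "ipr G x y = ipr G y x"
proof -
  have g: "G $ j $ i = G $ i $ j" for i j
  proof -
    have "(transpose G) $ i $ j = G $ j $ i" by (simp add: transpose_def)
    then show ?thesis using assms by simp
  qed
  show ?thesis unfolding ipr_def by (subst sum.swap) (simp add: g mult_ac)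
qed

lemma exists_nonnull: assumes "nondeg_sym G" shows "\<exists>x. ipr G x x \<noteq> 0"
proof (rule ccontr)
  assume "\<not> ?thesis" hence Z: "\<And>x. ipr G x x = 0" by auto
  have sym: "transpose G = G" using assms nondeg_sym_def by auto
  have "G $ i $ j = 0" for i j
  proof -
    have "ipr G (axis i 1 + axis j 1) (axis i 1 + axis j 1) = ipr G (axis i 1) (axis i 1)
       + ipr G (axis i 1) (axis j 1) + ipr G (axis j 1) (axis i 1) + ipr G (axis j 1) (axis j 1)"
      by (rule ipr_add)
    moreover have "ipr G (axis j 1) (axis i 1) = ipr G (axis i 1) (axis j 1)" by (rule ipr_sym[OF sym])
    ultimately show ?thesis using Z[of "axis i 1 + axis j 1"] Z[of "axis i 1"] Z[of "axis j 1"] ipr_axis[of G i j]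
      by linarith
  qed
  hence "G = 0" by (simp add: vec_eq_iff)
  moreover have "invertible G" using assms nondeg_sym_def by auto
  ultimately obtain B where "(0::real^'a^'a) ** B = mat 1" unfolding invertible_def by blast
  then have "((0::real^'a^'a) ** B) $ i $ i = (mat 1 :: real^'a^'a) $ i $ i" for i by simp
  then show False by (simp add: matrix_matrix_mult_def mat_def)
qed

theorem theorem1p5:
  fixes G :: "real^'n^'n"
    and T :: "'n \<Rightarrow> 'n \<Rightarrow> 'n \<Rightarrow> 'n \<Rightarrow> 'n \<Rightarrow> real"
  assumes dim: "CARD('n) \<ge> 3"
    and G: "nondeg_sym G"
    and T: "cdact T"
    and spacelike: "\<forall>x y. ip G (cvec x) (cvec x) = 1 \<longrightarrow> ip G (cvec y) (cvec y) = 1 \<longrightarrow>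
        eigenvalues (szabo G T (cvec x)) = eigenvalues (szabo G T (cvec y))"
    and timelike: "\<forall>x y. ip G (cvec x) (cvec x) = -1 \<longrightarrow> ip G (cvec y) (cvec y) = -1 \<longrightarrow>
        eigenvalues (szabo G T (cvec x)) = eigenvalues (szabo G T (cvec y))"
  shows "\<forall>x::complex^'n. ip G x x = 0 \<longrightarrow> nilpotent_mat (szabo G T x)"
proof -
  obtain x1 where x1: "ipr G x1 x1 \<noteq> 0" using exists_nonnull[OF G] by blast
  define \<epsilon> where "\<epsilon> = sgn (ipr G x1 x1)"
  have eps: "\<epsilon> = 1 \<or> \<epsilon> = -1" using x1 by (auto simp: \<epsilon>_def sgn_if)
  define x0 where "x0 = (1 / sqrt \<bar>ipr G x1 x1\<bar>) *\<^sub>R x1"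
  have x0: "ipr G x0 x0 = \<epsilon>"
  proof -
    have "ipr G x0 x0 = ipr G x1 x1 / \<bar>ipr G x1 x1\<bar>"
      by (simp add: x0_def ipr_scale power_divide)
    also have "\<dots> = \<epsilon>" using x1 by (auto simp: \<epsilon>_def sgn_if)
    finally show ?thesis .
  qed
  define E where "E = eigenvalues (szabo G T (cvec x0))"
  obtain es where es: "set es = E" using finite_list[OF eigenvalues_finite] E_def by blast
  have hyp: "\<forall>y. ipr G y y = \<epsilon> \<longrightarrow> eigenvalues (szabo G T (cvec y)) = E"
  proof (intro allI impI)
    fix y assume y: "ipr G y y = \<epsilon>"
    from eps show "eigenvalues (szabo G T (cvec y)) = E"
    proof
      assume e1: "\<epsilon> = 1"
      have "ip G (cvec y) (cvec y) = 1" "ip G (cvec x0) (cvec x0) = 1" using x0 y e1 by (simp_all add: ip_cvec)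
      then show ?thesis using spacelike[rule_format, of y x0] unfolding E_def by blast
    next
      assume e1: "\<epsilon> = -1"
      have "ip G (cvec y) (cvec y) = -1" "ip G (cvec x0) (cvec x0) = -1" using x0 y e1 by (simp_all add: ip_cvec)
      then show ?thesis using timelike[rule_format, of y x0] unfolding E_def by blast
    qed
  qed
  have P: "Mx G T \<epsilon> es (cvec x) = 0" if xpos: "\<epsilon> * ipr G x x > 0" for x
    unfolding Mx_def
  proof (rule KL)
    show "\<And>v. szabo G T (cvec x) *v (Kmat G T \<epsilon> es (cvec x) *v v) = Kmat G T \<epsilon> es (cvec x) *v (szabo G T (cvec x) *v v)"
      by (rule Kmat_comm)
    fix v \<mu> assume v: "v \<noteq> 0" "szabo G T (cvec x) *v v = \<mu> *s v"
    obtain l where l: "l \<in> E" "\<mu>^2 = complex_of_real \<epsilon> * l^2 * (ip G (cvec x) (cvec x))^3"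
      using kill_lemma[OF hyp eps xpos v] by blast
    have "(\<Prod>l\<leftarrow>es. \<mu>^2 - complex_of_real \<epsilon> * l^2 * (ip G (cvec x) (cvec x))^3) = 0"
    proof -
      define f where "f = (\<lambda>l. \<mu>^2 - complex_of_real \<epsilon> * l^2 * (ip G (cvec x) (cvec x))^3)"
      have h0: "0 = f l" using l(2) by (simp add: f_def)
      have "l \<in> set es" using l(1) es by simp
      then have "0 \<in> f ` set es" using h0 by (rule rev_image_eqI)
      then have "0 \<in> set (map f es)" by (simp only: set_map)
      then have "prod_list (map f es) = 0" by (simp only: prod_list_zero_iff)
      then show ?thesis by (simp only: f_def)
    qed
    then show "Kmat G T \<epsilon> es (cvec x) *v v = 0" using Kmat_eig[OF v(2)] by simp
  qed
  have x0pos: "\<epsilon> * ipr G x0 x0 > 0" using x0 eps by auto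
  have all_real: "Mx G T \<epsilon> es (cvec w) = 0" for w
    by (rule step1[OF hm_Mx x0pos P])
  have all: "Mx G T \<epsilon> es z = 0" for z
    by (rule step2[OF hm_Mx all_real])
  show ?thesis
  proof (intro allI impI)
    fix x :: "complex^'n" assume null: "ip G x x = 0"
    have K: "(\<lambda>u. Kmat G T \<epsilon> es x *v u) = (\<lambda>v. szabo G T x *v v)^^(2 * length es)"
      using Kmat_null[OF null] by auto
    have "((\<lambda>u. Kmat G T \<epsilon> es x *v u)^^(Suc DIM(complex^'n))) v = 0" for v
    proof -
      have "mpow (Kmat G T \<epsilon> es x) (Suc DIM(complex^'n)) = 0" using all[of x] by (simp only: Mx_def)
      then show ?thesis using mpow_apply[of "Kmat G T \<epsilon> es x" "Suc DIM(complex^'n)" v]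
        by (simp only: matrix_vector_mult_0)
    qed
    hence "((\<lambda>v. szabo G T x *v v)^^(2 * length es * Suc DIM(complex^'n))) = (\<lambda>v. 0)"
      unfolding K funpow_mult by auto
    thus "nilpotent_mat (szabo G T x)" unfolding nilpotent_mat_def by blast
  qed
qed


end
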